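(* Let $n,d\in\mathbb{N}_0$, let $\mathcal{P}(n,2d)$ be the set of homogeneous polynomials of degree $2d$ in $\mathbb{R}[x_0,\dots,x_n]$ that are non-negative on $\mathbb{R}^{n+1}$, let $t=(t_\alpha)_{\alpha\in\mathbb{N}_0^{n+1},|\alpha|=2d}$ be real numbers, and let $T$ be the linear map on the space of homogeneous polynomials of degree $2d$ in $x_0,\dots,x_n$ with $Tx^\alpha=t_\alpha x^\alpha$ for all $|\alpha|=2d$. Let $L_t$ be the linear functional on that space with $L_t(x^\alpha)=t_\alpha$. Then $T(\mathcal{P}(n,2d))\subseteq\mathcal{P}(n,2d)$ if and only if $L_t(p)\ge0$ for all $p\in\mathcal{P}(n,2d)$. *)

theory Defs
  imports Complex_Main
begin

text \<open>Homogeneous polynomials of degree k in the variables x_0,...,x_n with real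
coefficients are represented by their coefficient functions on exponent vectors
alpha :: nat => nat (alpha i = exponent of x_i), supported on exponents with
alpha i = 0 for i > n and |alpha| = k.\<close>

definition mexps :: "nat \<Rightarrow> nat \<Rightarrow> (nat \<Rightarrow> nat) set" where
  "mexps n k = {\<alpha>. (\<forall>i>n. \<alpha> i = 0) \<and> (\<Sum>i\<le>n. \<alpha> i) = k}"

definition hom_polys :: "nat \<Rightarrow> nat \<Rightarrow> ((nat \<Rightarrow> nat) \<Rightarrow> real) set" where
  "hom_polys n k = {p. \<forall>\<alpha>. \<alpha> \<notin> mexps n k \<longrightarrow> p \<alpha> = 0}"

definition peval :: "nat \<Rightarrow> nat \<Rightarrow> ((nat \<Rightarrow> nat) \<Rightarrow> real) \<Rightarrow> (nat \<Rightarrow> real) \<Rightarrow> real" where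
  "peval n k p x = (\<Sum>\<alpha>\<in>mexps n k. p \<alpha> * (\<Prod>i\<le>n. x i ^ \<alpha> i))"

definition Pnn :: "nat \<Rightarrow> nat \<Rightarrow> ((nat \<Rightarrow> nat) \<Rightarrow> real) set" where
  "Pnn n k = {p \<in> hom_polys n k. \<forall>x. peval n k p x \<ge> 0}"

definition Tdiag :: "((nat \<Rightarrow> nat) \<Rightarrow> real) \<Rightarrow> ((nat \<Rightarrow> nat) \<Rightarrow> real) \<Rightarrow> ((nat \<Rightarrow> nat) \<Rightarrow> real)" where
  "Tdiag t p = (\<lambda>\<alpha>. t \<alpha> * p \<alpha>)"

definition Lfun :: "nat \<Rightarrow> nat \<Rightarrow> ((nat \<Rightarrow> nat) \<Rightarrow> real) \<Rightarrow> ((nat \<Rightarrow> nat) \<Rightarrow> real) \<Rightarrow> real" where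
  "Lfun n k t p = (\<Sum>\<alpha>\<in>mexps n k. t \<alpha> * p \<alpha>)"

end

theory Submission
  imports Defs
begin

theorem mainTheorem7:
  fixes n d :: nat and t :: "(nat \<Rightarrow> nat) \<Rightarrow> real"
  shows "(\<forall>p\<in>Pnn n (2*d). Tdiag t p \<in> Pnn n (2*d)) \<longleftrightarrow>
         (\<forall>p\<in>Pnn n (2*d). Lfun n (2*d) t p \<ge> 0)"
proof
  assume H: "\<forall>p\<in>Pnn n (2*d). Tdiag t p \<in> Pnn n (2*d)"
  show "\<forall>p\<in>Pnn n (2*d). Lfun n (2*d) t p \<ge> 0"
  proof
    fix p assume "p \<in> Pnn n (2*d)"
    then have "Tdiag t p \<in> Pnn n (2*d)" using H by blast
    then have "peval n (2*d) (Tdiag t p) (\<lambda>_. 1) \<ge> 0" unfolding Pnn_def by blast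
    moreover have "peval n (2*d) (Tdiag t p) (\<lambda>_. 1) = Lfun n (2*d) t p"
      unfolding peval_def Lfun_def Tdiag_def by simp
    ultimately show "Lfun n (2*d) t p \<ge> 0" by simp
  qed
next
  assume H: "\<forall>p\<in>Pnn n (2*d). Lfun n (2*d) t p \<ge> 0"
  show "\<forall>p\<in>Pnn n (2*d). Tdiag t p \<in> Pnn n (2*d)"
  proof
    fix p assume p: "p \<in> Pnn n (2*d)"
    have hp: "Tdiag t p \<in> hom_polys n (2*d)"
      using p unfolding Pnn_def hom_polys_def Tdiag_def by auto
    have "peval n (2*d) (Tdiag t p) x \<ge> 0" for x
    proof -
      define q where "q = (\<lambda>\<alpha>. p \<alpha> * (\<Prod>i\<le>n. x i ^ \<alpha> i))"
      have qh: "q \<in> hom_polys n (2*d)"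
        using p unfolding Pnn_def hom_polys_def q_def by auto
      have "peval n (2*d) q y = peval n (2*d) p (\<lambda>i. x i * y i)" for y
        unfolding peval_def q_def
        by (rule sum.cong) (simp_all add: power_mult_distrib prod.distrib mult.assoc)
      then have "q \<in> Pnn n (2*d)" using qh p unfolding Pnn_def by auto
      then have "Lfun n (2*d) t q \<ge> 0" using H by blast
      moreover have "Lfun n (2*d) t q = peval n (2*d) (Tdiag t p) x"
        unfolding Lfun_def peval_def Tdiag_def q_def by (simp add: mult.assoc)
      ultimately show ?thesis by simp
    qed
    then show "Tdiag t p \<in> Pnn n (2*d)" using hp unfolding Pnn_def by blast
  qed
qed

end
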